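(* Assume the composite setting below with (G2). Let $(u_k,\Delta_k)\subset\mathbb{R}^n\times(0,\infty)$ with $u_k\to u$, $\Delta_k\to0$ and $\psi(u_k,\Delta_k)\to0$. Then $0\in\partial f(u)$.
   Context: Composite setting: $J:\mathbb{R}^m\times\mathbb{R}^n\to\mathbb{R}$ continuously differentiable; $S:\mathbb{R}^n\to\mathbb{R}^m$ locally Lipschitz continuous and directionally differentiable (directional derivative $S'(u;h)$); $f(u):=J(S(u),u)$. $\partial_B S(u)$ is the Bouligand subdifferential: all limits $\lim_j S'(u_j)$ with $u_j\to u$ and $S$ differentiable at $u_j$. $\partial f(u)$ is the Clarke subdifferential of $f$. $B_r(x)$ is the closed Euclidean ball. For each $u\in\mathbb{R}^n$, $\Delta>0$ let $\mathcal G(u,\Delta)\subset\mathbb{R}^{m\times n}$ be a nonempty bounded set, and define the model $\phi(u,\Delta;d):=\sup_{G\in\mathcal G(u,\Delta)}\langle G^\top\nabla_yJ(S(u),u)+\nabla_uJ(S(u),u),d\rangle$ and $\psi(u,\Delta):=-\inf_{\|h\|\le1}\phi(u,\Delta;h)$. Conditions: (G1) $\bigcup_{\xi\in B_\Delta(u)}\partial_BS(\xi)\subseteq\mathcal G(u,\Delta)$ for all $u$, $\Delta>0$; (G2) if $(u_k,\Delta_k)\to(u,0)$ with $0\notin\partial f(u)$, then $\sup_{G\in\mathcal G(u_k,\Delta_k)}\inf_{W\in\partial_BS(u)}\|G-W\|\to0$; (D) for all $u,h\in\mathbb{R}^n$ there is $G\in\partial_BS(u)$ with $S'(u;h)=Gh$.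 *)

theory Defs
  imports "HOL-Analysis.Analysis"
begin

definition clarke_dd :: "(real^'n \<Rightarrow> real) \<Rightarrow> real^'n \<Rightarrow> real^'n \<Rightarrow> ereal" where
  "clarke_dd f u h =
     Limsup (at (u, 0) within (UNIV \<times> {0<..}))
            (\<lambda>(y, t). ereal ((f (y + t *\<^sub>R h) - f y) / t))"

definition clarke_subdiff :: "(real^'n \<Rightarrow> real) \<Rightarrow> real^'n \<Rightarrow> (real^'n) set" where
  "clarke_subdiff f u = {g. \<forall>h. ereal (g \<bullet> h) \<le> clarke_dd f u h}"

definition bouligand :: "(real^'n \<Rightarrow> real^'m) \<Rightarrow> real^'n \<Rightarrow> (real^'n^'m) set" where
  "bouligand S u = {W. \<exists>x D. (\<forall>j. (S has_derivative (\<lambda>h. D j *v h)) (at (x j)))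
                              \<and> x \<longlonglongrightarrow> u \<and> D \<longlonglongrightarrow> W}"

definition locally_lipschitz :: "('a::metric_space \<Rightarrow> 'b::metric_space) \<Rightarrow> bool" where
  "locally_lipschitz S \<longleftrightarrow> (\<forall>x. \<exists>e>0. \<exists>L. L-lipschitz_on (ball x e) S)"

definition dir_differentiable :: "(real^'n \<Rightarrow> real^'m) \<Rightarrow> bool" where
  "dir_differentiable S \<longleftrightarrow>
     (\<forall>u h. \<exists>d. ((\<lambda>t. (S (u + t *\<^sub>R h) - S u) /\<^sub>R t) \<longlongrightarrow> d) (at_right 0))"

text \<open>Model phi(u,Delta;d) and psi(u,Delta); gy, gu are the partial gradients of J.\<close>
definition model_phi ::
  "(real^'n \<Rightarrow> real \<Rightarrow> (real^'n^'m) set) \<Rightarrow> (real^'n \<Rightarrow> real^'m)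
   \<Rightarrow> (real^'m \<Rightarrow> real^'n \<Rightarrow> real^'m) \<Rightarrow> (real^'m \<Rightarrow> real^'n \<Rightarrow> real^'n)
   \<Rightarrow> real^'n \<Rightarrow> real \<Rightarrow> real^'n \<Rightarrow> real" where
  "model_phi G S gy gu u \<Delta> d =
     (SUP M\<in>G u \<Delta>. (transpose M *v gy (S u) u + gu (S u) u) \<bullet> d)"

definition model_psi ::
  "(real^'n \<Rightarrow> real \<Rightarrow> (real^'n^'m) set) \<Rightarrow> (real^'n \<Rightarrow> real^'m)
   \<Rightarrow> (real^'m \<Rightarrow> real^'n \<Rightarrow> real^'m) \<Rightarrow> (real^'m \<Rightarrow> real^'n \<Rightarrow> real^'n)
   \<Rightarrow> real^'n \<Rightarrow> real \<Rightarrow> real" where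
  "model_psi G S gy gu u \<Delta> = - (INF h\<in>cball 0 1. model_phi G S gy gu u \<Delta> h)"

end

theory Submission
  imports Defs
begin

definition dq :: "(real^'n \<Rightarrow> real^'m) \<Rightarrow> real^'n \<Rightarrow> real \<Rightarrow> real^'n \<Rightarrow> real^'m" where
  "dq S h t x = (S (x + t *\<^sub>R h) - S x) /\<^sub>R t"

definition Ogood :: "(real^'n \<Rightarrow> real^'m) \<Rightarrow> real^'n \<Rightarrow> real \<Rightarrow> (real^'n) set" where
  "Ogood S h e = {y. \<exists>\<rho>>0. \<exists>\<delta>>0. \<forall>z\<in>ball y \<rho>. \<forall>w\<in>ball y \<rho>. \<forall>s\<in>{0<..\<delta>}. \<forall>t\<in>{0<..\<delta>}.
        norm (dq S h s z - dq S h t w) \<le> e}"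

lemma open_Ogood: "open (Ogood S h e)"
  unfolding open_contains_ball
proof
  fix y assume "y \<in> Ogood S h e"
  then obtain \<rho> \<delta> where r: "\<rho> > 0" "\<delta> > 0" and H: "\<forall>z\<in>ball y \<rho>. \<forall>w\<in>ball y \<rho>. \<forall>s\<in>{0<..\<delta>}. \<forall>t\<in>{0<..\<delta>}.
        norm (dq S h s z - dq S h t w) \<le> e" unfolding Ogood_def by blast
  have "ball y (\<rho>/2) \<subseteq> Ogood S h e"
  proof
    fix x assume x: "x \<in> ball y (\<rho>/2)"
    have "ball x (\<rho>/2) \<subseteq> ball y \<rho>"
    proof
      fix z assume "z \<in> ball x (\<rho>/2)"
      then have "dist x z < \<rho>/2" by simp
      moreover have "dist y x < \<rho>/2" using x by simp
      ultimately show "z \<in> ball y \<rho>" using dist_triangle[of y z x] by simp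
    qed
    then show "x \<in> Ogood S h e" unfolding Ogood_def using r H
      by (intro CollectI exI[of _ "\<rho>/2"] exI[of _ \<delta>]) (auto simp: subset_iff)
  qed
  then show "\<exists>r>0. ball y r \<subseteq> Ogood S h e" using r by (intro exI[of _ "\<rho>/2"]) auto
qed

lemma dense_Ogood:
  fixes S :: "real^'n \<Rightarrow> real^'m"
  assumes contS: "continuous_on UNIV S"
    and conv: "\<And>x. \<exists>d. ((\<lambda>t. dq S h t x) \<longlongrightarrow> d) (at_right 0)"
    and e: "e > 0" and r: "r > 0"
  shows "ball c r \<inter> Ogood S h e \<noteq> {}"
proof -
  define F where "F N = cball c (r/2) \<inter> (\<Inter>s\<in>{0<..1/(real N+1)}. \<Inter>t\<in>{0<..1/(real N+1)}.
      {x. norm (dq S h s x - dq S h t x) \<le> e/4})" for N :: nat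
  have contdq: "continuous_on UNIV (dq S h t)" for t
    unfolding dq_def
    by (intro continuous_intros continuous_on_compose2[OF contS]) auto
  have cl1: "closed {x. norm (dq S h s x - dq S h t x) \<le> e/4}" for s t
    by (intro closed_Collect_le continuous_on_norm continuous_on_diff contdq continuous_on_const)
  have closedF: "closed (F N)" for N
    unfolding F_def by (intro closed_Int closed_cball closed_INT ballI cl1)
  have cover: "\<exists>N. x \<in> F N" if x: "x \<in> cball c (r/2)" for x
  proof -
    obtain d where d: "((\<lambda>t. dq S h t x) \<longlongrightarrow> d) (at_right 0)" using conv by blast
    then have "eventually (\<lambda>t. dist (dq S h t x) d < e/8) (at_right (0::real))"
      using e by (intro tendstoD) auto
    then obtain b where b: "b > 0" and B: "\<And>t. t > 0 \<Longrightarrow> t < b \<Longrightarrow> dist (dq S h t x) d < e/8"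
      unfolding eventually_at_right_field by auto
    obtain N :: nat where N0: "inverse (real (Suc N)) < b"
      using reals_Archimedean[OF b] by blast
    have N: "1 / (real N + 1) < b" using N0 by (simp add: divide_inverse add.commute)
    have "x \<in> F N"
      unfolding F_def
    proof (intro IntI x INT_I CollectI)
      fix s t assume s: "s \<in> {0<..1/(real N+1)}" and t: "t \<in> {0<..1/(real N+1)}"
      have "dist (dq S h s x) d < e/8" "dist (dq S h t x) d < e/8"
        using B s t N by auto
      then have "dist (dq S h s x) (dq S h t x) < e/4"
        using dist_triangle2[of "dq S h s x" "dq S h t x" d] by linarith
      then show "norm (dq S h s x - dq S h t x) \<le> e/4" by (simp add: dist_norm)
    qed
    then show ?thesis by blast
  qed
  have "\<exists>N. \<not> (cball c (r/2) \<subseteq> closure (cball c (r/2) - F N))"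
  proof (rule ccontr)
    assume "\<nexists>N. \<not> cball c (r/2) \<subseteq> closure (cball c (r/2) - F N)"
    then have all: "\<And>N. cball c (r/2) \<subseteq> closure (cball c (r/2) - F N)" by blast
    have "cball c (r/2) \<subseteq> closure (\<Inter>(range (\<lambda>N. cball c (r/2) - F N)))"
    proof (rule Baire)
      fix T assume "T \<in> range (\<lambda>N. cball c (r/2) - F N)"
      then obtain N where T: "T = cball c (r/2) - F N" by blast
      have "openin (top_of_set (cball c (r/2))) (cball c (r/2) - F N)"
        by (intro openin_diff openin_subtopology_self closed_subset closedF) (auto simp: F_def)
      then show "openin (top_of_set (cball c (r/2))) T \<and> cball c (r/2) \<subseteq> closure T"
        using all T by auto
    qed simp_all
    moreover have "\<Inter>(range (\<lambda>N. cball c (r/2) - F N)) = {}" using cover by blast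
    ultimately have "cball c (r/2) \<subseteq> {}" by (metis closure_empty)
    then show False using r by auto
  qed
  then obtain N x where x: "x \<in> cball c (r/2)" and nx: "x \<notin> closure (cball c (r/2) - F N)"
    by blast
  then obtain e1 where e1: "e1 > 0" and E1: "\<And>y. y \<in> cball c (r/2) - F N \<Longrightarrow> dist y x \<ge> e1"
    using nx unfolding closure_approachable by (auto simp: not_less)
  have "x \<in> closure (ball c (r/2))" using x r by simp
  then obtain y0 where y0: "y0 \<in> ball c (r/2)" "dist y0 x < e1"
    unfolding closure_approachable using e1 by blast
  have "open (ball x e1 \<inter> ball c (r/2))" by auto
  moreover have "y0 \<in> ball x e1 \<inter> ball c (r/2)" using y0 by (auto simp: dist_commute)
  ultimately obtain \<rho>1 where \<rho>1: "\<rho>1 > 0" "ball y0 \<rho>1 \<subseteq> ball x e1 \<inter> ball c (r/2)"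
    using open_contains_ball by blast
  have inF: "z \<in> F N" if "z \<in> ball y0 \<rho>1" for z
  proof (rule ccontr)
    assume "z \<notin> F N"
    moreover have "z \<in> cball c (r/2)" "dist z x < e1" using \<rho>1 that by (auto simp: dist_commute)
    ultimately show False using E1[of z] by auto
  qed
  define t0 where "t0 = 1 / (real N + 1)"
  have t0: "t0 > 0" unfolding t0_def by auto
  have "isCont (dq S h t0) y0" using contdq by (simp add: continuous_on_eq_continuous_at)
  moreover have "e/4 > 0" using e by simp
  ultimately obtain \<rho>2 where \<rho>2: "\<rho>2 > 0" and R2: "\<And>z. dist z y0 < \<rho>2 \<Longrightarrow> dist (dq S h t0 z) (dq S h t0 y0) < e/4"
    unfolding continuous_at_eps_delta by blast
  define \<rho> where "\<rho> = min \<rho>1 \<rho>2"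
  have "y0 \<in> Ogood S h e"
  proof -
    have P: "\<rho> > 0" "t0 > 0" using \<rho>1 \<rho>2 t0 by (auto simp: \<rho>_def)
    have "norm (dq S h s z - dq S h t w) \<le> e" if  z: "z \<in> ball y0 \<rho>" and w: "w \<in> ball y0 \<rho>" and s: "s \<in> {0<..t0}" and t: "t \<in> {0<..t0}" for z w s t
    proof -
    have zF: "z \<in> F N" and wF: "w \<in> F N" using z w inF by (auto simp: \<rho>_def)
    have t0': "t0 \<in> {0<..1/(real N+1)}" using t0 by (simp add: t0_def)
    have a1: "norm (dq S h s z - dq S h t0 z) \<le> e/4"
      using zF s t0' unfolding F_def t0_def by auto
    have a2: "norm (dq S h t0 w - dq S h t w) \<le> e/4"
      using wF t t0' unfolding F_def t0_def by auto
    have a3: "norm (dq S h t0 z - dq S h t0 y0) \<le> e/4" "norm (dq S h t0 w - dq S h t0 y0) \<le> e/4"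
      using R2[of z] R2[of w] z w by (auto simp: \<rho>_def dist_norm norm_minus_commute less_imp_le)
    have "norm (dq S h s z - dq S h t w) \<le> norm (dq S h s z - dq S h t0 z) + norm (dq S h t0 z - dq S h t0 y0)
        + norm (dq S h t0 w - dq S h t0 y0) + norm (dq S h t0 w - dq S h t w)"
    proof -
      have "dq S h s z - dq S h t w = ((dq S h s z - dq S h t0 z) + (dq S h t0 z - dq S h t0 y0))
        + ((dq S h t0 y0 - dq S h t0 w) + (dq S h t0 w - dq S h t w))" by simp
      then have "norm (dq S h s z - dq S h t w) = norm (((dq S h s z - dq S h t0 z) + (dq S h t0 z - dq S h t0 y0))
        + ((dq S h t0 y0 - dq S h t0 w) + (dq S h t0 w - dq S h t w)))" by (rule arg_cong)
      also have "\<dots> \<le> norm ((dq S h s z - dq S h t0 z) + (dq S h t0 z - dq S h t0 y0))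
        + norm ((dq S h t0 y0 - dq S h t0 w) + (dq S h t0 w - dq S h t w))"
        by (rule norm_triangle_ineq)
      also have "\<dots> \<le> (norm (dq S h s z - dq S h t0 z) + norm (dq S h t0 z - dq S h t0 y0))
        + (norm (dq S h t0 y0 - dq S h t0 w) + norm (dq S h t0 w - dq S h t w))"
        by (intro add_mono norm_triangle_ineq)
      finally show ?thesis by (simp add: norm_minus_commute)
    qed
    then show "norm (dq S h s z - dq S h t w) \<le> e" using a1 a2 a3 by linarith
    qed
    note Hz = this
    have H: "\<forall>z\<in>ball y0 \<rho>. \<forall>w\<in>ball y0 \<rho>. \<forall>s\<in>{0<..t0}. \<forall>t\<in>{0<..t0}.
        norm (dq S h s z - dq S h t w) \<le> e"
      apply (intro ballI) apply (rule Hz) apply assumption+ done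
    show ?thesis unfolding Ogood_def by (intro CollectI exI[of _ \<rho>] exI[of _ t0] conjI P H)
  qed
  moreover have "y0 \<in> ball c r" using y0(1) r unfolding mem_ball by linarith
  ultimately show ?thesis by (metis IntI empty_iff)
qed

definition ddir :: "(real^'n \<Rightarrow> real^'m) \<Rightarrow> real^'n \<Rightarrow> real^'n \<Rightarrow> real^'m" where
  "ddir S h x = (SOME d. ((\<lambda>t. dq S h t x) \<longlongrightarrow> d) (at_right 0))"

lemma ddir_tendsto:
  assumes "\<And>x. \<exists>d. ((\<lambda>t. dq S h t x) \<longlongrightarrow> d) (at_right 0)"
  shows "((\<lambda>t. dq S h t x) \<longlongrightarrow> ddir S h x) (at_right 0)"
  unfolding ddir_def using assms by (rule someI_ex)

lemma unif_est:
  fixes S :: "real^'n \<Rightarrow> real^'m"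
  assumes conv: "\<And>x. \<exists>d. ((\<lambda>t. dq S h t x) \<longlongrightarrow> d) (at_right 0)"
    and x0: "\<And>k::nat. x0 \<in> Ogood S h (1/(real k+1))"
    and e: "e > 0"
  shows "\<exists>\<rho>>0. \<exists>\<delta>>0. \<forall>y\<in>ball x0 \<rho>. \<forall>t\<in>{0<..\<delta>}. norm (S (y + t *\<^sub>R h) - S y - t *\<^sub>R ddir S h x0) \<le> t * e"
proof -
  obtain k :: nat where k0: "inverse (real (Suc k)) < e" using reals_Archimedean[OF e] by blast
  have k: "1/(real k+1) \<le> e" using k0 by (simp add: divide_inverse add.commute)
  obtain \<rho> \<delta> where r: "\<rho> > 0" "\<delta> > 0" and H: "\<forall>z\<in>ball x0 \<rho>. \<forall>w\<in>ball x0 \<rho>. \<forall>s\<in>{0<..\<delta>}. \<forall>t\<in>{0<..\<delta>}.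
        norm (dq S h s z - dq S h t w) \<le> 1/(real k+1)" using x0[of k] unfolding Ogood_def by blast
  have "norm (S (y + t *\<^sub>R h) - S y - t *\<^sub>R ddir S h x0) \<le> t * e" if y: "y \<in> ball x0 \<rho>" and t: "t \<in> {0<..\<delta>}" for y t
  proof -
    have lim: "((\<lambda>s. dq S h s x0 - dq S h t y) \<longlongrightarrow> ddir S h x0 - dq S h t y) (at_right 0)"
      by (intro tendsto_diff ddir_tendsto conv tendsto_const)
    have ev: "eventually (\<lambda>s. norm (dq S h s x0 - dq S h t y) \<le> 1/(real k+1)) (at_right (0::real))"
      unfolding eventually_at_right_field
    proof (intro exI[of _ \<delta>] conjI allI impI)
      show "0 < \<delta>" using r by simp
      fix s :: real assume "0 < s" "s < \<delta>"
      then show "norm (dq S h s x0 - dq S h t y) \<le> 1/(real k+1)"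
        using H y t r by auto
    qed
    have "norm (ddir S h x0 - dq S h t y) \<le> 1/(real k+1)"
      by (rule Lim_norm_ubound[OF _ lim ev]) simp
    then have n1: "norm (dq S h t y - ddir S h x0) \<le> e" using k by (simp add: norm_minus_commute)
    have tpos: "t > 0" using t by simp
    have "S (y + t *\<^sub>R h) - S y - t *\<^sub>R ddir S h x0 = t *\<^sub>R (dq S h t y - ddir S h x0)"
      using tpos by (simp add: dq_def scaleR_diff_right)
    then have "norm (S (y + t *\<^sub>R h) - S y - t *\<^sub>R ddir S h x0) = t * norm (dq S h t y - ddir S h x0)"
      using tpos by simp
    also have "\<dots> \<le> t * e" using n1 tpos by (simp add: mult_left_mono)
    finally show ?thesis .
  qed
  then show ?thesis using r by blast
qed

lemma ddir_neg:
  fixes S :: "real^'n \<Rightarrow> real^'m"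
  assumes U1: "\<And>e. e > 0 \<Longrightarrow> \<exists>\<rho>>0. \<exists>\<delta>>0. \<forall>y\<in>ball x0 \<rho>. \<forall>t\<in>{0<..\<delta>}. norm (S (y + t *\<^sub>R h) - S y - t *\<^sub>R a) \<le> t * e"
    and U2: "\<And>e. e > 0 \<Longrightarrow> \<exists>\<rho>>0. \<exists>\<delta>>0. \<forall>y\<in>ball x0 \<rho>. \<forall>t\<in>{0<..\<delta>}. norm (S (y + t *\<^sub>R (-h)) - S y - t *\<^sub>R b) \<le> t * e"
  shows "b = - a"
proof -
  have main: "norm (a + b) \<le> 2 * e" if e: "e > 0" for e
  proof -
    obtain \<rho>1 \<delta>1 where r1: "\<rho>1 > 0" "\<delta>1 > 0" and H1: "\<forall>y\<in>ball x0 \<rho>1. \<forall>t\<in>{0<..\<delta>1}. norm (S (y + t *\<^sub>R h) - S y - t *\<^sub>R a) \<le> t * e"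
      using U1[OF e] by blast
    obtain \<rho>2 \<delta>2 where r2: "\<rho>2 > 0" "\<delta>2 > 0" and H2: "\<forall>y\<in>ball x0 \<rho>2. \<forall>t\<in>{0<..\<delta>2}. norm (S (y + t *\<^sub>R (-h)) - S y - t *\<^sub>R b) \<le> t * e"
      using U2[OF e] by blast
    define t where "t = min \<delta>1 (min \<delta>2 (\<rho>2 / (norm h + 1)))"
    have hp: "norm h + 1 > 0" by (intro add_nonneg_pos) auto
    have t: "t > 0" "t \<le> \<delta>1" "t \<le> \<delta>2" "t \<le> \<rho>2 / (norm h + 1)" using r1 r2 hp by (auto simp: t_def)
    have "norm (t *\<^sub>R h) < \<rho>2"
    proof -
      have "norm (t *\<^sub>R h) = t * norm h" using t by simp
      also have "\<dots> \<le> \<rho>2 / (norm h + 1) * norm h" using t(4) by (rule mult_right_mono) simp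
      also have "\<dots> < \<rho>2" using r2 hp by (simp add: pos_divide_less_eq)
      finally show ?thesis .
    qed
    then have yin: "x0 + t *\<^sub>R h \<in> ball x0 \<rho>2" by (simp add: dist_norm)
    have c1: "norm (S (x0 + t *\<^sub>R h) - S x0 - t *\<^sub>R a) \<le> t * e" using H1 r1 t by auto
    have c2: "norm (S (x0 + t *\<^sub>R h + t *\<^sub>R (-h)) - S (x0 + t *\<^sub>R h) - t *\<^sub>R b) \<le> t * e"
      by (rule H2[rule_format, OF yin]) (use t in simp)
    have "t *\<^sub>R (a + b) = - ((S (x0 + t *\<^sub>R h) - S x0 - t *\<^sub>R a) + (S (x0 + t *\<^sub>R h + t *\<^sub>R (-h)) - S (x0 + t *\<^sub>R h) - t *\<^sub>R b))"
      by (simp add: algebra_simps)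
    then have "norm (t *\<^sub>R (a + b)) = norm ((S (x0 + t *\<^sub>R h) - S x0 - t *\<^sub>R a) + (S (x0 + t *\<^sub>R h + t *\<^sub>R (-h)) - S (x0 + t *\<^sub>R h) - t *\<^sub>R b))"
      by (subst \<open>t *\<^sub>R (a + b) = _\<close>) (rule norm_minus_cancel)
    also have "\<dots> \<le> norm (S (x0 + t *\<^sub>R h) - S x0 - t *\<^sub>R a) + norm (S (x0 + t *\<^sub>R h + t *\<^sub>R (-h)) - S (x0 + t *\<^sub>R h) - t *\<^sub>R b)"
      by (rule norm_triangle_ineq)
    also have "\<dots> \<le> t * e + t * e" using c1 c2 by (rule add_mono)
    finally have "t * norm (a + b) \<le> t * (2 * e)" using t by simp
    then show ?thesis using t by (simp add: mult_le_cancel_left_pos)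
  qed
  have "norm (a + b) \<le> 0 + e" if "e > 0" for e
    using main[of "e/2"] that by simp
  then have "norm (a + b) \<le> 0"
    by (rule field_le_epsilon)
  then have "norm (a + b) = 0" by simp
  then show ?thesis by (simp add: eq_neg_iff_add_eq_0 add.commute)
qed

lemma norm_scaleR_axis: "norm (c *\<^sub>R axis i (1::real)) = \<bar>c\<bar>"
  by simp

lemma sum_abs_le_card_norm:
  fixes v :: "real^'n"
  shows "(\<Sum>i\<in>UNIV. \<bar>v $ i\<bar>) \<le> real CARD('n) * norm v"
  using sum_bounded_above[of UNIV "\<lambda>i. \<bar>v $ i\<bar>" "norm v"] component_le_norm_cart[of v]
  by simp

lemma telescope:
  fixes S :: "real^'n \<Rightarrow> real^'m" and Dp Dn :: "'n \<Rightarrow> real^'m"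
  assumes neg: "\<And>i. Dn i = - Dp i"
    and Hp: "\<And>i y t. y \<in> ball x0 \<rho> \<Longrightarrow> t \<in> {0<..\<delta>} \<Longrightarrow> norm (S (y + t *\<^sub>R axis i 1) - S y - t *\<^sub>R Dp i) \<le> t * e"
    and Hn: "\<And>i y t. y \<in> ball x0 \<rho> \<Longrightarrow> t \<in> {0<..\<delta>} \<Longrightarrow> norm (S (y + t *\<^sub>R (- axis i 1)) - S y - t *\<^sub>R Dn i) \<le> t * e"
    and vs: "(\<Sum>i\<in>UNIV. \<bar>v $ i\<bar>) < \<rho>" and vd: "\<And>i. \<bar>v $ i\<bar> \<le> \<delta>"
  shows "norm (S (x0 + (\<Sum>i\<in>I. (v $ i) *\<^sub>R axis i 1)) - S x0 - (\<Sum>i\<in>I. (v $ i) *\<^sub>R Dp i)) \<le> e * (\<Sum>i\<in>I. \<bar>v $ i\<bar>)"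
proof -
  have fin: "finite I" by simp
  show ?thesis using fin
  proof (induction I rule: finite_induct)
    case empty
    then show ?case by simp
  next
    case (insert j I)
    define p where "p = x0 + (\<Sum>i\<in>I. (v $ i) *\<^sub>R axis i 1)"
    have "norm (\<Sum>i\<in>I. (v $ i) *\<^sub>R axis i (1::real)) \<le> (\<Sum>i\<in>I. \<bar>v $ i\<bar>)"
      using norm_sum[of "\<lambda>i. (v $ i) *\<^sub>R axis i (1::real)" I] by (simp add: norm_scaleR_axis)
    also have "\<dots> \<le> (\<Sum>i\<in>UNIV. \<bar>v $ i\<bar>)" by (intro sum_mono2) auto
    finally have "norm (\<Sum>i\<in>I. (v $ i) *\<^sub>R axis i (1::real)) < \<rho>" using vs by linarith
    then have pin: "p \<in> ball x0 \<rho>" by (simp add: p_def dist_norm)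
    have step: "norm (S (p + (v $ j) *\<^sub>R axis j 1) - S p - (v $ j) *\<^sub>R Dp j) \<le> e * \<bar>v $ j\<bar>"
    proof (cases "v $ j = 0")
      case True then show ?thesis by simp
    next
      case False
      show ?thesis
      proof (cases "v $ j > 0")
        case True
        then have "norm (S (p + (v $ j) *\<^sub>R axis j 1) - S p - (v $ j) *\<^sub>R Dp j) \<le> (v $ j) * e"
          using Hp[OF pin, of "v $ j" j] vd[of j] by simp
        then show ?thesis using True by (simp add: mult.commute)
      next
        case False
        then have vn: "v $ j < 0" using \<open>v $ j \<noteq> 0\<close> by simp
        have "norm (S (p + (- v $ j) *\<^sub>R (- axis j 1)) - S p - (- v $ j) *\<^sub>R Dn j) \<le> (- v $ j) * e"
          using Hn[OF pin, of "- v $ j" j] vd[of j] vn by simp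
        then show ?thesis using vn by (simp add: neg mult.commute)
      qed
    qed
    have eq: "S (x0 + (\<Sum>i\<in>insert j I. (v $ i) *\<^sub>R axis i 1)) - S x0 - (\<Sum>i\<in>insert j I. (v $ i) *\<^sub>R Dp i)
      = (S (p + (v $ j) *\<^sub>R axis j 1) - S p - (v $ j) *\<^sub>R Dp j) + (S p - S x0 - (\<Sum>i\<in>I. (v $ i) *\<^sub>R Dp i))"
      using insert.hyps by (simp add: p_def algebra_simps)
    have "norm (S (x0 + (\<Sum>i\<in>insert j I. (v $ i) *\<^sub>R axis i 1)) - S x0 - (\<Sum>i\<in>insert j I. (v $ i) *\<^sub>R Dp i))
      \<le> norm (S (p + (v $ j) *\<^sub>R axis j 1) - S p - (v $ j) *\<^sub>R Dp j) + norm (S p - S x0 - (\<Sum>i\<in>I. (v $ i) *\<^sub>R Dp i))"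
      unfolding eq by (rule norm_triangle_ineq)
    also have "\<dots> \<le> e * \<bar>v $ j\<bar> + e * (\<Sum>i\<in>I. \<bar>v $ i\<bar>)"
      using step insert.IH by (simp add: p_def)
    also have "\<dots> = e * (\<Sum>i\<in>insert j I. \<bar>v $ i\<bar>)" using insert.hyps by (simp add: distrib_left)
    finally show ?case .
  qed
qed

lemma basis_expansion_real: "(\<Sum>i\<in>UNIV. (v $ i) *\<^sub>R axis i (1::real)) = (v::real^'n)"
  using basis_expansion[of v] by (simp add: scalar_mult_eq_scaleR)

lemma mat_of_cols: "(\<chi> k. \<chi> i. (D i :: real^'m) $ k) *v (v::real^'n) = (\<Sum>i\<in>UNIV. (v $ i) *\<^sub>R D i)"
  by (simp add: vec_eq_iff matrix_vector_mult_def sum_component mult.commute)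

lemma diff_point_exists:
  fixes S :: "real^'n \<Rightarrow> real^'m"
  assumes contS: "continuous_on UNIV S"
    and conv: "\<And>h x. \<exists>d. ((\<lambda>t. dq S h t x) \<longlongrightarrow> d) (at_right 0)"
    and r: "r > 0"
  shows "\<exists>x\<in>ball c r. \<exists>A. (S has_derivative (\<lambda>v. A *v v)) (at x)"
proof -
  define dirs :: "(real^'n) set" where "dirs = range (\<lambda>i. axis i 1) \<union> range (\<lambda>i. - axis i 1)"
  define \<G> where "\<G> = (\<lambda>(k,h). Ogood S h (1/(real k+1))) ` (SIGMA k:(UNIV::nat set). dirs)"
  have cd: "countable dirs" by (rule countable_finite) (simp add: dirs_def)
  have cG: "countable \<G>" unfolding \<G>_def
    by (intro countable_image countable_SIGMA cd) simp
  have "UNIV \<subseteq> closure (\<Inter>\<G>)"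
  proof (rule Baire)
    fix T assume "T \<in> \<G>"
    then obtain k h where T: "T = Ogood S h (1/(real k+1))" unfolding \<G>_def by auto
    have "open T" unfolding T by (rule open_Ogood)
    moreover have "x \<in> closure T" for x
      unfolding closure_approachable
    proof (intro allI impI)
      fix e :: real assume "e > 0"
      have "ball x e \<inter> T \<noteq> {}" unfolding T
        by (rule dense_Ogood[OF contS conv]) (use \<open>e > 0\<close> in auto)
      then obtain y where "y \<in> ball x e" "y \<in> T" by blast
      then show "\<exists>y\<in>T. dist y x < e" by (auto simp: dist_commute)
    qed
    ultimately show "openin (top_of_set UNIV) T \<and> UNIV \<subseteq> closure T" by auto
  qed (auto simp: cG)
  then have "c \<in> closure (\<Inter>\<G>)" by auto
  then obtain x0 where x0G: "x0 \<in> \<Inter>\<G>" and dx0: "dist x0 c < r"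
    unfolding closure_approachable using r by blast
  have x0O: "\<And>k. x0 \<in> Ogood S h (1/(real k+1))" if "h \<in> dirs" for h
    using x0G that unfolding \<G>_def by auto
  define Dp where "Dp i = ddir S (axis i 1) x0" for i
  define Dn where "Dn i = ddir S (- axis i 1) x0" for i
  have Up: "\<exists>\<rho>>0. \<exists>\<delta>>0. \<forall>y\<in>ball x0 \<rho>. \<forall>t\<in>{0<..\<delta>}. norm (S (y + t *\<^sub>R axis i 1) - S y - t *\<^sub>R Dp i) \<le> t * e"
    if "e > 0" for i e
    unfolding Dp_def by (rule unif_est[OF conv x0O that]) (auto simp: dirs_def)
  have Un: "\<exists>\<rho>>0. \<exists>\<delta>>0. \<forall>y\<in>ball x0 \<rho>. \<forall>t\<in>{0<..\<delta>}. norm (S (y + t *\<^sub>R (- axis i 1)) - S y - t *\<^sub>R Dn i) \<le> t * e"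
    if "e > 0" for i e
    unfolding Dn_def by (rule unif_est[OF conv x0O that]) (auto simp: dirs_def)
  have neg: "Dn i = - Dp i" for i
    by (rule ddir_neg[OF Up Un])
  define A where "A = (\<chi> k. \<chi> i. (Dp i) $ k)"
  have Av: "A *v v = (\<Sum>i\<in>UNIV. (v $ i) *\<^sub>R Dp i)" for v unfolding A_def by (rule mat_of_cols)
  have "(S has_derivative (\<lambda>v. A *v v)) (at x0)"
    unfolding has_derivative_at_alt
  proof (intro conjI allI impI)
    show "bounded_linear ((*v) A)" by simp
    fix e :: real assume e: "e > 0"
    define n where "n = real CARD('n)"
    have n: "n > 0" unfolding n_def by simp
    define \<epsilon> where "\<epsilon> = e / n"
    have \<epsilon>: "\<epsilon> > 0" using e n by (simp add: \<epsilon>_def)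
    have "\<forall>i. \<exists>\<rho>>0. \<exists>\<delta>>0. \<forall>y\<in>ball x0 \<rho>. \<forall>t\<in>{0<..\<delta>}. norm (S (y + t *\<^sub>R axis i 1) - S y - t *\<^sub>R Dp i) \<le> t * \<epsilon>"
      using Up[OF \<epsilon>] by blast
    then obtain R1 D1 where RD1: "\<And>i. R1 i > 0" "\<And>i. D1 i > 0"
      and H1: "\<And>i. \<forall>y\<in>ball x0 (R1 i). \<forall>t\<in>{0<..D1 i}. norm (S (y + t *\<^sub>R axis i 1) - S y - t *\<^sub>R Dp i) \<le> t * \<epsilon>"
      by metis
    have "\<forall>i. \<exists>\<rho>>0. \<exists>\<delta>>0. \<forall>y\<in>ball x0 \<rho>. \<forall>t\<in>{0<..\<delta>}. norm (S (y + t *\<^sub>R (- axis i 1)) - S y - t *\<^sub>R Dn i) \<le> t * \<epsilon>"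
      using Un[OF \<epsilon>] by blast
    then obtain R2 D2 where RD2: "\<And>i. R2 i > 0" "\<And>i. D2 i > 0"
      and H2: "\<And>i. \<forall>y\<in>ball x0 (R2 i). \<forall>t\<in>{0<..D2 i}. norm (S (y + t *\<^sub>R (- axis i 1)) - S y - t *\<^sub>R Dn i) \<le> t * \<epsilon>"
      by metis
    define \<rho>0 where "\<rho>0 = Min (range R1 \<union> range R2)"
    define \<delta>0 where "\<delta>0 = Min (range D1 \<union> range D2)"
    have \<rho>0: "\<rho>0 > 0" "\<And>i. \<rho>0 \<le> R1 i" "\<And>i. \<rho>0 \<le> R2 i"
      using RD1 RD2 by (auto simp: \<rho>0_def Min_gr_iff)
    have \<delta>0: "\<delta>0 > 0" "\<And>i. \<delta>0 \<le> D1 i" "\<And>i. \<delta>0 \<le> D2 i"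
      using RD1 RD2 by (auto simp: \<delta>0_def Min_gr_iff)
    have Hp: "norm (S (y + t *\<^sub>R axis i 1) - S y - t *\<^sub>R Dp i) \<le> t * \<epsilon>"
      if "y \<in> ball x0 \<rho>0" "t \<in> {0<..\<delta>0}" for i y t
      using H1[of i] that \<rho>0(2)[of i] \<delta>0(2)[of i] by (auto simp: subset_iff)
    have Hn: "norm (S (y + t *\<^sub>R (- axis i 1)) - S y - t *\<^sub>R Dn i) \<le> t * \<epsilon>"
      if "y \<in> ball x0 \<rho>0" "t \<in> {0<..\<delta>0}" for i y t
      using H2[of i] that \<rho>0(3)[of i] \<delta>0(3)[of i] by (auto simp: subset_iff)
    define d where "d = min (\<rho>0 / n) \<delta>0"
    have d: "d > 0" using \<rho>0 \<delta>0 n by (simp add: d_def)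
    have "norm (S y - S x0 - A *v (y - x0)) \<le> e * norm (y - x0)" if y: "norm (y - x0) < d" for y
    proof -
      define v where "v = y - x0"
      have sv: "(\<Sum>i\<in>UNIV. \<bar>v $ i\<bar>) \<le> n * norm v" unfolding n_def by (rule sum_abs_le_card_norm)
      have "norm v < \<rho>0 / n" using y by (simp add: v_def d_def)
      then have "n * norm v < n * (\<rho>0 / n)" using n by (rule mult_strict_left_mono)
      then have vs: "(\<Sum>i\<in>UNIV. \<bar>v $ i\<bar>) < \<rho>0" using sv n by simp
      have vd: "\<bar>v $ i\<bar> \<le> \<delta>0" for i
        using component_le_norm_cart[of v i] y by (simp add: v_def d_def)
      have "norm (S (x0 + (\<Sum>i\<in>UNIV. (v $ i) *\<^sub>R axis i 1)) - S x0 - (\<Sum>i\<in>UNIV. (v $ i) *\<^sub>R Dp i)) \<le> \<epsilon> * (\<Sum>i\<in>UNIV. \<bar>v $ i\<bar>)"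
        by (rule telescope[OF neg Hp Hn vs vd])
      then have "norm (S y - S x0 - A *v (y - x0)) \<le> \<epsilon> * (\<Sum>i\<in>UNIV. \<bar>v $ i\<bar>)"
        unfolding basis_expansion_real Av[symmetric] by (simp add: v_def)
      also have "\<dots> \<le> \<epsilon> * (n * norm v)" using sv \<epsilon> by (simp add: mult_left_mono)
      also have "\<dots> = e * norm (y - x0)" using n by (simp add: \<epsilon>_def v_def)
      finally show ?thesis .
    qed
    then show "\<exists>d>0. \<forall>y. norm (y - x0) < d \<longrightarrow> norm (S y - S x0 - A *v (y - x0)) \<le> e * norm (y - x0)"
      using d by blast
  qed
  moreover have "x0 \<in> ball c r" using dx0 by (simp add: dist_commute)
  ultimately show ?thesis by blast
qed

lemma mv_scale: "(A::real^'n^'m) *v (t *\<^sub>R h) = t *\<^sub>R (A *v h)"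
  by (simp add: scaleR_matrix_vector_assoc matrix_scaleR_vector_ac)

lemma bl_mv: "bounded_linear (\<lambda>M::real^'n^'m. M *v h)"
proof -
  have "linear (\<lambda>M::real^'n^'m. M *v h)"
    by (rule linearI) (simp_all add: matrix_vector_mult_add_rdistrib scaleR_matrix_vector_assoc)
  then show ?thesis by (simp add: linear_conv_bounded_linear)
qed

lemma tendsto_mv: "(D \<longlongrightarrow> (W::real^'n^'m)) F \<Longrightarrow> ((\<lambda>j. D j *v h) \<longlongrightarrow> W *v h) F"
  using bounded_linear.tendsto[OF bl_mv] by blast

lemma locally_lipschitz_cont:
  assumes "locally_lipschitz (S :: 'a::metric_space \<Rightarrow> 'b::metric_space)"
  shows "continuous_on UNIV S"
proof -
  have "isCont S x" for x
  proof -
    obtain e L where e: "e > 0" and L: "L-lipschitz_on (ball x e) S"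
      using assms unfolding locally_lipschitz_def by blast
    have "continuous_on (ball x e) S" using L by (rule lipschitz_on_continuous_on)
    then show ?thesis using e by (simp add: continuous_on_eq_continuous_at)
  qed
  then show ?thesis by (simp add: continuous_at_imp_continuous_on)
qed

lemma deriv_bound:
  fixes S :: "real^'n \<Rightarrow> real^'m"
  assumes D: "(S has_derivative (\<lambda>v. A *v v)) (at x)"
    and L: "L-lipschitz_on (ball x \<rho>) S" and \<rho>: "\<rho> > 0"
  shows "norm (A *v h) \<le> L * norm h"
proof -
  have main: "norm (A *v h) \<le> L * norm h + \<epsilon> * norm h" if \<epsilon>: "\<epsilon> > 0" for \<epsilon>
  proof -
    obtain d where d: "d > 0" and Dd: "\<And>y. norm (y - x) < d \<Longrightarrow> norm (S y - S x - A *v (y - x)) \<le> \<epsilon> * norm (y - x)"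
      using D \<epsilon> unfolding has_derivative_at_alt by blast
    define q where "q = norm h + 1"
    have hp: "q > 0" unfolding q_def by (intro add_nonneg_pos) auto
    define t where "t = min d \<rho> / (2 * q)"
    have t: "t > 0" using d \<rho> hp by (simp add: t_def)
    have "t * norm h < min d \<rho>"
    proof -
      have "t * norm h \<le> t * q" using t by (simp add: q_def)
      also have "\<dots> = min d \<rho> / 2" using hp by (simp add: t_def field_simps)
      also have "\<dots> < min d \<rho>" using d \<rho> by (simp add: min_def)
      finally show ?thesis .
    qed
    then have th: "norm (t *\<^sub>R h) < d" "norm (t *\<^sub>R h) < \<rho>" using t by auto
    have y1: "x + t *\<^sub>R h \<in> ball x \<rho>" using th by (simp add: dist_norm)
    have x1: "x \<in> ball x \<rho>" using \<rho> by simp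
    have a: "norm (S (x + t *\<^sub>R h) - S x - A *v (t *\<^sub>R h)) \<le> \<epsilon> * norm (t *\<^sub>R h)"
      using Dd[of "x + t *\<^sub>R h"] th by simp
    have b: "norm (S (x + t *\<^sub>R h) - S x) \<le> L * norm (t *\<^sub>R h)"
      using lipschitz_onD[OF L y1 x1] by (simp add: dist_norm)
    have eqA: "A *v (t *\<^sub>R h) = (S (x + t *\<^sub>R h) - S x) - (S (x + t *\<^sub>R h) - S x - A *v (t *\<^sub>R h))"
      by simp
    have "norm (A *v (t *\<^sub>R h)) = norm ((S (x + t *\<^sub>R h) - S x) - (S (x + t *\<^sub>R h) - S x - A *v (t *\<^sub>R h)))"
      using eqA by (rule arg_cong)
    also have "\<dots> \<le> norm (S (x + t *\<^sub>R h) - S x) + norm (S (x + t *\<^sub>R h) - S x - A *v (t *\<^sub>R h))"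
      by (rule norm_triangle_ineq4)
    also have "\<dots> \<le> L * norm (t *\<^sub>R h) + \<epsilon> * norm (t *\<^sub>R h)" using a b by simp
    finally have "norm (A *v (t *\<^sub>R h)) \<le> t * (L * norm h + \<epsilon> * norm h)"
      using t by (simp add: algebra_simps)
    moreover have "norm (A *v (t *\<^sub>R h)) = t * norm (A *v h)"
      unfolding mv_scale norm_scaleR using t by simp
    ultimately have "t * norm (A *v h) \<le> t * (L * norm h + \<epsilon> * norm h)" by simp
    then show ?thesis using t by (simp add: mult_le_cancel_left_pos)
  qed
  have "norm (A *v h) \<le> L * norm h + e" if "e > 0" for e
  proof -
    have hp: "norm h + 1 > 0" by (intro add_nonneg_pos) auto
    have "norm (A *v h) \<le> L * norm h + e / (norm h + 1) * norm h" using main[of "e / (norm h + 1)"] that hp by simp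
    also have "e / (norm h + 1) * norm h \<le> e" using that hp by (simp add: field_simps)
    finally show ?thesis by simp
  qed
  then show ?thesis by (rule field_le_epsilon)
qed

lemma entry_le:
  fixes A :: "real^'n^'m"
  shows "\<bar>A $ k $ i\<bar> \<le> norm (A *v axis i 1)"
proof -
  have "(A *v axis i 1) $ k = A $ k $ i" by (simp add: matrix_vector_mult_basis column_def)
  then show ?thesis using component_le_norm_cart[of "A *v axis i 1" k] by simp
qed

lemma matrix_norm_le:
  fixes A :: "real^'n^'m"
  assumes "\<And>h. norm (A *v h) \<le> L * norm h"
  shows "norm A \<le> real CARD('m) * (real CARD('n) * L)"
proof -
  have "norm A \<le> (\<Sum>k\<in>UNIV. norm (A $ k))" unfolding norm_vec_def by (rule L2_set_le_sum) simp
  also have "\<dots> \<le> (\<Sum>k\<in>(UNIV::'m set). real CARD('n) * L)"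
  proof (rule sum_mono)
    fix k
    have "norm (A $ k) \<le> (\<Sum>i\<in>UNIV. \<bar>A $ k $ i\<bar>)" by (rule norm_le_l1_cart)
    also have "\<dots> \<le> (\<Sum>i\<in>(UNIV::'n set). L)"
    proof (rule sum_mono)
      fix i
      have "\<bar>A $ k $ i\<bar> \<le> norm (A *v axis i 1)" by (rule entry_le)
      also have "\<dots> \<le> L * norm (axis i (1::real))" by (rule assms)
      finally show "\<bar>A $ k $ i\<bar> \<le> L" by simp
    qed
    finally show "norm (A $ k) \<le> real CARD('n) * L" by simp
  qed
  finally show ?thesis by simp
qed

lemma bouligand_props:
  fixes S :: "real^'n \<Rightarrow> real^'m"
  assumes lip: "locally_lipschitz S" and dd: "dir_differentiable S"
  shows "bouligand S u \<noteq> {}" "\<exists>L. \<forall>W\<in>bouligand S u. \<forall>h. norm (W *v h) \<le> L * norm h"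
proof -
  have contS: "continuous_on UNIV S" by (rule locally_lipschitz_cont[OF lip])
  have conv: "\<exists>d. ((\<lambda>t. dq S h t x) \<longlongrightarrow> d) (at_right 0)" for h x
    using dd unfolding dir_differentiable_def dq_def by blast
  obtain e L where e: "e > 0" and L: "L-lipschitz_on (ball u e) S"
    using lip unfolding locally_lipschitz_def by blast
  have near: "norm (A *v h) \<le> L * norm h" if "x \<in> ball u (e/2)" "(S has_derivative (\<lambda>v. A *v v)) (at x)" for x A h
  proof -
    have "ball x (e/2) \<subseteq> ball u e"
    proof
      fix z assume "z \<in> ball x (e/2)"
      then show "z \<in> ball u e" using that(1) dist_triangle[of u z x] by simp
    qed
    then have "L-lipschitz_on (ball x (e/2)) S" using L by (rule lipschitz_on_subset[rotated])
    then show ?thesis using that(2) e by (intro deriv_bound[of S A x L "e/2"]) auto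
  qed
  show "\<exists>L. \<forall>W\<in>bouligand S u. \<forall>h. norm (W *v h) \<le> L * norm h"
  proof (intro exI ballI allI)
    fix W h assume "W \<in> bouligand S u"
    then obtain x D where xD: "\<And>j. (S has_derivative (\<lambda>h. D j *v h)) (at (x j))" and
      xl: "x \<longlonglongrightarrow> u" and Dl: "D \<longlonglongrightarrow> W" unfolding bouligand_def by blast
    have "eventually (\<lambda>j. x j \<in> ball u (e/2)) sequentially"
      using xl e by (intro topological_tendstoD) auto
    then have ev: "eventually (\<lambda>j. norm (D j *v h) \<le> L * norm h) sequentially"
      by eventually_elim (use near xD in blast)
    show "norm (W *v h) \<le> L * norm h"
      by (rule Lim_norm_ubound[OF _ tendsto_mv[OF Dl] ev]) simp
  qed
  have "\<forall>j::nat. \<exists>x\<in>ball u (min (e/2) (1/(real j+1))). \<exists>A. (S has_derivative (\<lambda>v. A *v v)) (at x)"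
    using e by (intro allI diff_point_exists[OF contS conv]) simp
  then obtain x A where xA: "\<And>j. x j \<in> ball u (min (e/2) (1/(real j+1)))"
    "\<And>j. (S has_derivative (\<lambda>v. A j *v v)) (at (x j))" by metis
  define M where "M = real CARD('m) * (real CARD('n) * L)"
  have Ab: "A j \<in> cball 0 M" for j
    using matrix_norm_le[of "A j" L] near[OF _ xA(2)] xA(1) unfolding M_def by auto
  obtain W r where W: "W \<in> cball 0 M" and r: "strict_mono r" and Wl: "(A \<circ> r) \<longlonglongrightarrow> W"
    using compact_imp_seq_compact[OF compact_cball, of 0 M] Ab unfolding seq_compact_def by metis
  have xl: "x \<longlonglongrightarrow> u"
  proof (rule metric_LIMSEQ_I)
    fix \<epsilon> :: real assume "\<epsilon> > 0"
    then obtain N :: nat where N0: "inverse (real (Suc N)) < \<epsilon>" using reals_Archimedean by blast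
    have "dist (x n) u < \<epsilon>" if "n \<ge> N" for n
    proof -
      have "dist u (x n) < 1/(real n+1)" using xA(1)[of n] by simp
      also have "1/(real n+1) \<le> 1/(real N+1)" using that by (simp add: frac_le)
      also have "\<dots> < \<epsilon>" using N0 by (simp add: divide_inverse add.commute)
      finally show ?thesis by (simp add: dist_commute)
    qed
    then show "\<exists>N. \<forall>n\<ge>N. dist (x n) u < \<epsilon>" by blast
  qed
  have "W \<in> bouligand S u"
    unfolding bouligand_def
    using xA(2) LIMSEQ_subseq_LIMSEQ[OF xl r] Wl by (intro CollectI exI[of _ "x \<circ> r"] exI[of _ "A \<circ> r"]) auto
  then show "bouligand S u \<noteq> {}" by blast
qed

lemma transpose_inner: "(transpose (M::real^'n^'m) *v p) \<bullet> d = p \<bullet> (M *v d)"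
  by (simp add: inner_vec_def matrix_vector_mult_def transpose_def sum_distrib_left sum_distrib_right
      mult.commute mult.left_commute sum.swap[of _ "UNIV::'n set"])

lemma mv_norm:
  fixes A :: "real^'n^'m"
  shows "norm (A *v x) \<le> real (CARD('m) * CARD('n)) * norm A * norm x"
proof -
  have "norm (A *v x) \<le> (\<Sum>k\<in>UNIV. \<bar>(A *v x) $ k\<bar>)" by (rule norm_le_l1_cart)
  also have "\<dots> \<le> (\<Sum>k\<in>(UNIV::'m set). real CARD('n) * (norm A * norm x))"
  proof (rule sum_mono)
    fix k
    have "\<bar>(A *v x) $ k\<bar> = \<bar>\<Sum>i\<in>UNIV. A $ k $ i * x $ i\<bar>" by (simp add: matrix_vector_mult_def)
    also have "\<dots> \<le> (\<Sum>i\<in>UNIV. \<bar>A $ k $ i * x $ i\<bar>)" by (rule sum_abs)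
    also have "\<dots> \<le> (\<Sum>i\<in>(UNIV::'n set). norm A * norm x)"
    proof (rule sum_mono)
      fix i
      have "\<bar>A $ k $ i\<bar> \<le> norm A"
        by (rule order_trans[OF component_le_norm_cart[of "A $ k" i] Finite_Cartesian_Product.norm_nth_le])
      moreover have "\<bar>x $ i\<bar> \<le> norm x" by (rule component_le_norm_cart)
      ultimately show "\<bar>A $ k $ i * x $ i\<bar> \<le> norm A * norm x"
        by (simp add: abs_mult mult_mono)
    qed
    finally show "\<bar>(A *v x) $ k\<bar> \<le> real CARD('n) * (norm A * norm x)" by simp
  qed
  finally show ?thesis by (simp add: mult.assoc)
qed

lemma seq_small:
  assumes "\<And>j. norm (s j :: 'a::real_normed_vector) \<le> 1/(real j+1)"
  shows "s \<longlonglongrightarrow> 0"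
proof (rule Lim_null_comparison)
  show "eventually (\<lambda>j. norm (s j) \<le> 1/(real j+1)) sequentially" using assms by simp
  show "(\<lambda>j. 1/(real j+1)) \<longlonglongrightarrow> 0"
    using LIMSEQ_inverse_real_of_nat by (simp add: divide_inverse add.commute)
qed

lemma Limsup_ge_seq:
  fixes g :: "'a \<Rightarrow> real"
  assumes ev: "\<And>P. eventually P F \<Longrightarrow> eventually (\<lambda>j. P (z j)) sequentially"
    and lim: "(\<lambda>j. g (z j)) \<longlonglongrightarrow> a"
  shows "ereal a \<le> Limsup F (\<lambda>p. ereal (g p))"
  unfolding Limsup_def
proof (rule INF_greatest)
  fix P assume "P \<in> {P. eventually P F}"
  then have "eventually (\<lambda>j. P (z j)) sequentially" using ev by simp
  then have "eventually (\<lambda>j. ereal (g (z j)) \<le> Sup ((\<lambda>p. ereal (g p)) ` {x. P x})) sequentially"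
    by eventually_elim (auto intro: Sup_upper)
  moreover have "(\<lambda>j. ereal (g (z j))) \<longlonglongrightarrow> ereal a" using lim by (rule tendsto_ereal)
  ultimately show "ereal a \<le> Sup ((\<lambda>p. ereal (g p)) ` {x. P x})"
    using tendsto_upperbound by fastforce
qed

lemma dq_approx:
  fixes f :: "real^'n \<Rightarrow> real"
  assumes D: "(f has_derivative f') (at x)" and \<epsilon>: "\<epsilon> > 0" and \<delta>: "\<delta> > 0"
  shows "\<exists>t. 0 < t \<and> t < \<delta> \<and> \<bar>(f (x + t *\<^sub>R h) - f x) / t - f' h\<bar> \<le> \<epsilon>"
proof -
  define q where "q = norm h + 1"
  have q: "q > 0" "norm h \<le> q" unfolding q_def by (auto intro: add_nonneg_pos)
  have bl: "bounded_linear f'" using D by (rule has_derivative_bounded_linear)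
  have "\<epsilon> / q > 0" using \<epsilon> q by simp
  then obtain d where d: "d > 0" and Dd: "\<And>y. norm (y - x) < d \<Longrightarrow> \<bar>f y - f x - f' (y - x)\<bar> \<le> \<epsilon> / q * norm (y - x)"
    using D unfolding has_derivative_at_alt by (metis real_norm_def)
  define t where "t = min \<delta> d / (2 * q)"
  have t: "t > 0" using d \<delta> q by (simp add: t_def)
  have tq: "t * q = min \<delta> d / 2" using q by (simp add: t_def field_simps)
  have "t * norm h \<le> t * q" using t q by (simp add: mult_left_mono)
  then have tn: "t * norm h < d" using tq d \<delta> by (simp add: min_def split: if_splits)
  have tl: "t < \<delta>"
  proof -
    have "t \<le> t * q" using t q by (simp add: q_def)
    then show ?thesis using tq d \<delta> by (simp add: min_def split: if_splits)
  qed
  have "\<bar>f (x + t *\<^sub>R h) - f x - f' (t *\<^sub>R h)\<bar> \<le> \<epsilon> / q * norm (t *\<^sub>R h)"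
    using Dd[of "x + t *\<^sub>R h"] tn t by simp
  moreover have "f' (t *\<^sub>R h) = t * f' h"
    using linear_scale[OF bounded_linear.linear[OF bl]] by simp
  ultimately have "\<bar>f (x + t *\<^sub>R h) - f x - t * f' h\<bar> \<le> t * (\<epsilon> / q * norm h)" using t by (simp add: mult_ac)
  moreover have "f (x + t *\<^sub>R h) - f x - t * f' h = t * ((f (x + t *\<^sub>R h) - f x) / t - f' h)"
    using t by (simp add: field_simps)
  ultimately have "t * \<bar>(f (x + t *\<^sub>R h) - f x) / t - f' h\<bar> \<le> t * (\<epsilon> / q * norm h)"
    using t by (simp add: abs_mult)
  then have "\<bar>(f (x + t *\<^sub>R h) - f x) / t - f' h\<bar> \<le> \<epsilon> / q * norm h"
    using t by (rule mult_left_le_imp_le)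
  also have "\<dots> \<le> \<epsilon> / q * q" using q \<epsilon> by (intro mult_left_mono) auto
  also have "\<dots> = \<epsilon>" using q by simp
  finally show ?thesis using t tl by blast
qed

lemma clarke_ge:
  fixes J :: "real^'m \<Rightarrow> real^'n \<Rightarrow> real"
    and gy :: "real^'m \<Rightarrow> real^'n \<Rightarrow> real^'m"
    and gu :: "real^'m \<Rightarrow> real^'n \<Rightarrow> real^'n"
    and S :: "real^'n \<Rightarrow> real^'m"
  assumes J_deriv: "\<And>y v. ((\<lambda>p. J (fst p) (snd p)) has_derivative
                        (\<lambda>(h, k). gy y v \<bullet> h + gu y v \<bullet> k)) (at (y, v))"
    and gy_cont: "continuous_on UNIV (\<lambda>p. gy (fst p) (snd p))"
    and gu_cont: "continuous_on UNIV (\<lambda>p. gu (fst p) (snd p))"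
    and contS: "continuous_on UNIV S"
    and W: "W \<in> bouligand S u"
  shows "ereal (gy (S u) u \<bullet> (W *v h) + gu (S u) u \<bullet> h) \<le> clarke_dd (\<lambda>w. J (S w) w) u h"
proof -
  define f where "f = (\<lambda>w. J (S w) w)"
  obtain x D where xD: "\<And>j. (S has_derivative (\<lambda>h. D j *v h)) (at (x j))" and
    xl: "x \<longlonglongrightarrow> u" and Dl: "D \<longlonglongrightarrow> W" using W unfolding bouligand_def by blast
  define f' where "f' j v = gy (S (x j)) (x j) \<bullet> (D j *v v) + gu (S (x j)) (x j) \<bullet> v" for j v
  have fd: "(f has_derivative f' j) (at (x j))" for j
  proof -
    have P: "((\<lambda>w. (S w, w)) has_derivative (\<lambda>v. (D j *v v, v))) (at (x j))"
      by (intro has_derivative_Pair xD has_derivative_ident)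
    have "((\<lambda>w. J (fst (S w, w)) (snd (S w, w))) has_derivative
        (\<lambda>v. (\<lambda>(h, k). gy (S (x j)) (x j) \<bullet> h + gu (S (x j)) (x j) \<bullet> k) (D j *v v, v))) (at (x j))"
      using has_derivative_compose[OF P J_deriv[of "S (x j)" "x j"]] by simp
    then show ?thesis by (simp add: f_def f'_def[abs_def])
  qed
  have "\<forall>j. \<exists>t. 0 < t \<and> t < 1/(real j+1) \<and> \<bar>(f (x j + t *\<^sub>R h) - f (x j)) / t - f' j h\<bar> \<le> 1/(real j+1)"
    by (intro allI dq_approx[OF fd]) auto
  then obtain t where t: "\<And>j. 0 < t j" "\<And>j. t j < 1/(real j+1)"
    and tq: "\<And>j. \<bar>(f (x j + t j *\<^sub>R h) - f (x j)) / t j - f' j h\<bar> \<le> 1/(real j+1)" by metis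
  define g where "g p = (f (fst p + snd p *\<^sub>R h) - f (fst p)) / snd p" for p
  define z where "z j = (x j, t j)" for j
  have tl: "t \<longlonglongrightarrow> 0" by (rule seq_small) (use t in \<open>auto simp: less_imp_le\<close>)
  have zl: "z \<longlonglongrightarrow> (u, 0)" unfolding z_def by (intro tendsto_Pair xl tl)
  have ev: "eventually (\<lambda>j. P (z j)) sequentially"
    if Pev: "eventually P (at (u, 0) within UNIV \<times> {0<..})" for P
  proof -
    have "\<exists>d>0. \<forall>p\<in>UNIV \<times> {0<..}. p \<noteq> (u, 0) \<and> dist p (u, 0) < d \<longrightarrow> P p"
      using Pev by (simp only: eventually_at)
    then obtain d where d: "d > 0" and Pd0: "\<forall>p\<in>UNIV \<times> {0<..}. p \<noteq> (u, 0) \<and> dist p (u, 0) < d \<longrightarrow> P p"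
      by blast
    have "eventually (\<lambda>j. dist (z j) (u, 0) < d) sequentially" using zl d by (rule tendstoD)
    then show ?thesis
    proof eventually_elim
      case (elim j)
      have "z j \<in> UNIV \<times> {0<..}" "z j \<noteq> (u, 0)" using t(1)[of j] by (auto simp: z_def)
      then show ?case using elim by (intro Pd0[rule_format]) auto
    qed
  qed
  define a where "a = gy (S u) u \<bullet> (W *v h) + gu (S u) u \<bullet> h"
  have c1: "(\<lambda>j. gy (S (x j)) (x j)) \<longlonglongrightarrow> gy (S u) u"
  proof -
    have "(\<lambda>j. (S (x j), x j)) \<longlonglongrightarrow> (S u, u)"
      by (intro tendsto_Pair xl continuous_on_tendsto_compose[OF contS xl]) auto
    from continuous_on_tendsto_compose[OF gy_cont this] show ?thesis by simp
  qed
  have c2: "(\<lambda>j. gu (S (x j)) (x j)) \<longlonglongrightarrow> gu (S u) u"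
  proof -
    have "(\<lambda>j. (S (x j), x j)) \<longlonglongrightarrow> (S u, u)"
      by (intro tendsto_Pair xl continuous_on_tendsto_compose[OF contS xl]) auto
    from continuous_on_tendsto_compose[OF gu_cont this] show ?thesis by simp
  qed
  have fl: "(\<lambda>j. f' j h) \<longlonglongrightarrow> a"
    unfolding f'_def a_def by (intro tendsto_add tendsto_inner c1 c2 tendsto_mv Dl tendsto_const)
  have dl: "(\<lambda>j. g (z j) - f' j h) \<longlonglongrightarrow> 0"
    by (rule seq_small) (use tq in \<open>simp add: g_def z_def\<close>)
  have gl: "(\<lambda>j. g (z j)) \<longlonglongrightarrow> a"
    using tendsto_add[OF dl fl] by simp
  have "ereal a \<le> Limsup (at (u, 0) within UNIV \<times> {0<..}) (\<lambda>p. ereal (g p))"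
    by (rule Limsup_ge_seq[where z=z and g=g, OF ev gl])
  moreover have "(\<lambda>p. ereal (g p)) = (\<lambda>(y, t). ereal ((f (y + t *\<^sub>R h) - f y) / t))"
    by (auto simp: fun_eq_iff g_def)
  ultimately show ?thesis unfolding clarke_dd_def a_def f_def by simp
qed
theorem lemma3p4:
  fixes J :: "real^'m \<Rightarrow> real^'n \<Rightarrow> real"
    and gy :: "real^'m \<Rightarrow> real^'n \<Rightarrow> real^'m"
    and gu :: "real^'m \<Rightarrow> real^'n \<Rightarrow> real^'n"
    and S :: "real^'n \<Rightarrow> real^'m"
    and G :: "real^'n \<Rightarrow> real \<Rightarrow> (real^'n^'m) set"
    and uk :: "nat \<Rightarrow> real^'n" and \<Delta>k :: "nat \<Rightarrow> real" and u :: "real^'n"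
  assumes J_deriv: "\<And>y v. ((\<lambda>p. J (fst p) (snd p)) has_derivative
                        (\<lambda>(h, k). gy y v \<bullet> h + gu y v \<bullet> k)) (at (y, v))"
    and gy_cont: "continuous_on UNIV (\<lambda>p. gy (fst p) (snd p))"
    and gu_cont: "continuous_on UNIV (\<lambda>p. gu (fst p) (snd p))"
    and S_lip: "locally_lipschitz S"
    and S_dir: "dir_differentiable S"
    and G_ne: "\<And>v \<Delta>. \<Delta> > 0 \<Longrightarrow> G v \<Delta> \<noteq> {}"
    and G_bdd: "\<And>v \<Delta>. \<Delta> > 0 \<Longrightarrow> bounded (G v \<Delta>)"
    and G2: "\<And>vk \<delta>k v. (\<forall>k. \<delta>k k > 0) \<Longrightarrow> vk \<longlonglongrightarrow> v \<Longrightarrow> \<delta>k \<longlonglongrightarrow> 0 \<Longrightarrow>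
               0 \<notin> clarke_subdiff (\<lambda>w. J (S w) w) v \<Longrightarrow>
               (\<lambda>k. SUP M\<in>G (vk k) (\<delta>k k). INF W\<in>bouligand S v. norm (M - W)) \<longlonglongrightarrow> 0"
    and uk_pos: "\<forall>k. \<Delta>k k > 0"
    and uk_lim: "uk \<longlonglongrightarrow> u"
    and \<Delta>k_lim: "\<Delta>k \<longlonglongrightarrow> 0"
    and psi_lim: "(\<lambda>k. model_psi G S gy gu (uk k) (\<Delta>k k)) \<longlonglongrightarrow> 0"
  shows "0 \<in> clarke_subdiff (\<lambda>w. J (S w) w) u"
proof (rule ccontr)
  assume n0: "0 \<notin> clarke_subdiff (\<lambda>w. J (S w) w) u"
  then obtain h0 where h0: "clarke_dd (\<lambda>w. J (S w) w) u h0 < 0"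
    unfolding clarke_subdiff_def by (auto simp: not_le zero_ereal_def)
  have contS: "continuous_on UNIV S" by (rule locally_lipschitz_cont[OF S_lip])
  define B where "B = bouligand S u"
  have Bne: "B \<noteq> {}" unfolding B_def by (rule bouligand_props(1)[OF S_lip S_dir])
  obtain LW where LW: "\<And>W h. W \<in> B \<Longrightarrow> norm (W *v h) \<le> LW * norm h"
    using bouligand_props(2)[OF S_lip S_dir, of u] unfolding B_def by blast
  define Pi where "Pi = gy (S u) u"
  define Qi where "Qi = gu (S u) u"
  obtain z where z1: "clarke_dd (\<lambda>w. J (S w) w) u h0 < ereal z" and z2: "ereal z < 0"
    using ereal_dense2[OF h0] by blast
  have z: "z < 0" using z2 by simp
  have Kz: "Pi \<bullet> (W *v h0) + Qi \<bullet> h0 < z" if W: "W \<in> B" for W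
  proof -
    have "ereal (Pi \<bullet> (W *v h0) + Qi \<bullet> h0) \<le> clarke_dd (\<lambda>w. J (S w) w) u h0"
      unfolding Pi_def Qi_def by (rule clarke_ge[OF J_deriv gy_cont gu_cont contS W[unfolded B_def]])
    then have "ereal (Pi \<bullet> (W *v h0) + Qi \<bullet> h0) < ereal z" using z1 by (rule le_less_trans)
    then show ?thesis by simp
  qed
  obtain W0 where W0: "W0 \<in> B" using Bne by blast
  have h0nz: "h0 \<noteq> 0"
  proof
    assume "h0 = 0"
    then have "Pi \<bullet> (W0 *v h0) + Qi \<bullet> h0 = 0" by simp
    then show False using Kz[OF W0] z by simp
  qed
  then have nh0: "norm h0 > 0" by simp
  define d where "d = (1 / norm h0) *\<^sub>R h0"
  have nd: "norm d = 1" using nh0 by (simp add: d_def)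
  define c where "c = - z / (2 * norm h0)"
  have "z / (2 * norm h0) < 0" using z nh0 by (intro divide_neg_pos) auto
  then have c: "c > 0" by (simp add: c_def)
  have Kd: "Pi \<bullet> (W *v d) + Qi \<bullet> d \<le> - 2 * c" if W: "W \<in> B" for W
  proof -
    have "Pi \<bullet> (W *v d) + Qi \<bullet> d = (Pi \<bullet> (W *v h0) + Qi \<bullet> h0) / norm h0"
      by (simp add: d_def mv_scale inner_scaleR_right add_divide_distrib)
    also have "\<dots> < z / norm h0" using Kz[OF W] nh0 by (simp add: divide_strict_right_mono)
    also have "\<dots> = - 2 * c" using nh0 by (simp add: c_def)
    finally show ?thesis by simp
  qed
  define Gk where "Gk k = G (uk k) (\<Delta>k k)" for k
  define a where "a k = (SUP M\<in>Gk k. INF W\<in>B. norm (M - W))" for k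
  have al: "a \<longlonglongrightarrow> 0"
    unfolding a_def Gk_def B_def by (rule G2[OF uk_pos uk_lim \<Delta>k_lim n0])
  define P where "P k = gy (S (uk k)) (uk k)" for k
  define Q where "Q k = gu (S (uk k)) (uk k)" for k
  have SPl: "(\<lambda>k. (S (uk k), uk k)) \<longlonglongrightarrow> (S u, u)"
    by (intro tendsto_Pair uk_lim continuous_on_tendsto_compose[OF contS uk_lim]) auto
  have Pl: "P \<longlonglongrightarrow> Pi"
    using continuous_on_tendsto_compose[OF gy_cont SPl] by (simp add: P_def[abs_def] Pi_def)
  have Ql: "Q \<longlonglongrightarrow> Qi"
    using continuous_on_tendsto_compose[OF gu_cont SPl] by (simp add: Q_def[abs_def] Qi_def)
  have Gne: "Gk k \<noteq> {}" for k using G_ne uk_pos by (simp add: Gk_def)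
  have "\<exists>R. \<forall>M\<in>Gk k. norm M \<le> R" for k
    using G_bdd[of "\<Delta>k k" "uk k"] uk_pos unfolding Gk_def bounded_iff by blast
  then obtain R where R: "\<And>k M. M \<in> Gk k \<Longrightarrow> norm M \<le> R k" by metis
  define C where "C = real (CARD('m) * CARD('n))"
  have C: "C \<ge> 0" by (simp add: C_def)
  define val where "val k M h = (transpose M *v P k + Q k) \<bullet> h" for k M h
  have val_eq: "val k M h = P k \<bullet> (M *v h) + Q k \<bullet> h" for k M h
    by (simp only: val_def inner_add_left transpose_inner)
  have val_abs: "\<bar>val k M h\<bar> \<le> (norm (P k) * (C * norm M) + norm (Q k)) * norm h" for k M h
  proof -
    have "\<bar>P k \<bullet> (M *v h)\<bar> \<le> norm (P k) * norm (M *v h)" by (rule Cauchy_Schwarz_ineq2)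
    also have "\<dots> \<le> norm (P k) * (C * norm M * norm h)"
      using mv_norm[of M h] by (intro mult_left_mono) (simp_all add: C_def)
    finally have 1: "\<bar>P k \<bullet> (M *v h)\<bar> \<le> norm (P k) * (C * norm M * norm h)" .
    have 2: "\<bar>Q k \<bullet> h\<bar> \<le> norm (Q k) * norm h" by (rule Cauchy_Schwarz_ineq2)
    show ?thesis unfolding val_eq using 1 2 by (simp add: algebra_simps abs_triangle_ineq order_trans[OF abs_triangle_ineq])
  qed
  have bddv: "bdd_above ((\<lambda>M. val k M h) ` Gk k)" for k h
  proof (rule bdd_aboveI2)
    fix M assume M: "M \<in> Gk k"
    have "val k M h \<le> (norm (P k) * (C * norm M) + norm (Q k)) * norm h" using val_abs[of k M h] by simp
    also have "\<dots> \<le> (norm (P k) * (C * R k) + norm (Q k)) * norm h"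
      using R[OF M] C by (intro mult_right_mono add_right_mono mult_left_mono) auto
    finally show "val k M h \<le> (norm (P k) * (C * R k) + norm (Q k)) * norm h" .
  qed
  have phi_eq: "model_phi G S gy gu (uk k) (\<Delta>k k) h = (SUP M\<in>Gk k. val k M h)" for k h
    unfolding model_phi_def val_def Gk_def P_def Q_def by (rule refl)
  define e where "e k = norm (P k - Pi) * LW + norm (P k) * C * (a k + 1/(real k+1)) + norm (Q k - Qi)" for k
  have stepA: "val k M d \<le> - 2 * c + e k" if M: "M \<in> Gk k" for k M
  proof -
    have bb: "bdd_below ((\<lambda>W. norm (M - W)) ` B)" by (rule bdd_belowI2[of _ 0]) simp
    have ba: "bdd_above ((\<lambda>M. INF W\<in>B. norm (M - W)) ` Gk k)"
    proof (rule bdd_aboveI2)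
      fix M' assume M': "M' \<in> Gk k"
      have "(INF W\<in>B. norm (M' - W)) \<le> norm (M' - W0)"
        by (rule cINF_lower[OF _ W0]) (rule bdd_belowI2[of _ 0], simp)
      also have "\<dots> \<le> norm M' + norm W0" by (rule norm_triangle_ineq4)
      also have "\<dots> \<le> R k + norm W0" using R[OF M'] by simp
      finally show "(INF W\<in>B. norm (M' - W)) \<le> R k + norm W0" .
    qed
    have "(INF W\<in>B. norm (M - W)) \<le> a k" unfolding a_def by (rule cSUP_upper[OF M ba])
    moreover have "(0::real) < 1/(real k+1)" by simp
    ultimately have "Inf ((\<lambda>W. norm (M - W)) ` B) < a k + 1/(real k+1)" by linarith
    then obtain W where W: "W \<in> B" and MW: "norm (M - W) < a k + 1/(real k+1)"
      using cInf_lessD[of "(\<lambda>W. norm (M - W)) ` B"] Bne by blast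
    have "val k M d = P k \<bullet> (W *v d) + P k \<bullet> ((M - W) *v d) + Q k \<bullet> d"
      by (simp add: val_eq matrix_vector_mult_diff_rdistrib inner_diff_right)
    also have "\<dots> = (Pi \<bullet> (W *v d) + Qi \<bullet> d) + (P k - Pi) \<bullet> (W *v d) + P k \<bullet> ((M - W) *v d) + (Q k - Qi) \<bullet> d"
      by (simp add: inner_diff_left)
    also have "\<dots> \<le> - 2 * c + norm (P k - Pi) * LW + norm (P k) * C * (a k + 1/(real k+1)) + norm (Q k - Qi)"
    proof -
      have t1: "(P k - Pi) \<bullet> (W *v d) \<le> norm (P k - Pi) * LW"
      proof -
        have "(P k - Pi) \<bullet> (W *v d) \<le> norm (P k - Pi) * norm (W *v d)" by (rule norm_cauchy_schwarz)
        also have "\<dots> \<le> norm (P k - Pi) * LW" using LW[OF W, of d] nd by (intro mult_left_mono) auto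
        finally show ?thesis .
      qed
      have t2: "P k \<bullet> ((M - W) *v d) \<le> norm (P k) * C * (a k + 1/(real k+1))"
      proof -
        have "P k \<bullet> ((M - W) *v d) \<le> norm (P k) * norm ((M - W) *v d)" by (rule norm_cauchy_schwarz)
        also have "\<dots> \<le> norm (P k) * (C * norm (M - W))"
          using mv_norm[of "M - W" d] nd by (intro mult_left_mono) (auto simp: C_def)
        also have "\<dots> \<le> norm (P k) * (C * (a k + 1/(real k+1)))"
          using MW C by (intro mult_left_mono) auto
        finally show ?thesis by (simp add: mult.assoc)
      qed
      have t3: "(Q k - Qi) \<bullet> d \<le> norm (Q k - Qi)"
        using norm_cauchy_schwarz[of "Q k - Qi" d] nd by simp
      show ?thesis using Kd[OF W] t1 t2 t3 by linarith
    qed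
    finally show ?thesis by (simp add: e_def)
  qed
  have stepC: "model_psi G S gy gu (uk k) (\<Delta>k k) \<ge> 2 * c - e k" for k
  proof -
    obtain M0 where M0: "M0 \<in> Gk k" using Gne by blast
    have phid: "model_phi G S gy gu (uk k) (\<Delta>k k) d \<le> - 2 * c + e k"
      unfolding phi_eq by (rule cSUP_least[OF Gne stepA])
    have bbl: "bdd_below ((\<lambda>h. model_phi G S gy gu (uk k) (\<Delta>k k) h) ` cball 0 1)"
    proof (rule bdd_belowI2)
      fix h :: "real^'n" assume h: "h \<in> cball 0 1"
      have "- ((norm (P k) * (C * norm M0) + norm (Q k)) * norm h) \<le> val k M0 h"
        using val_abs[of k M0 h] by linarith
      moreover have "(norm (P k) * (C * norm M0) + norm (Q k)) * norm h \<le> (norm (P k) * (C * norm M0) + norm (Q k))"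
        using h C by (intro mult_left_le) auto
      moreover have "val k M0 h \<le> model_phi G S gy gu (uk k) (\<Delta>k k) h"
        unfolding phi_eq by (rule cSUP_upper[OF M0 bddv])
      ultimately show "- (norm (P k) * (C * norm M0) + norm (Q k)) \<le> model_phi G S gy gu (uk k) (\<Delta>k k) h"
        by linarith
    qed
    have "(INF h\<in>cball 0 1. model_phi G S gy gu (uk k) (\<Delta>k k) h) \<le> model_phi G S gy gu (uk k) (\<Delta>k k) d"
      by (rule cINF_lower[OF bbl]) (simp add: nd)
    then show ?thesis unfolding model_psi_def using phid by linarith
  qed
  have el: "e \<longlonglongrightarrow> 0"
  proof -
    have o1: "(\<lambda>k. 1/(real k+1)) \<longlonglongrightarrow> 0"
      using LIMSEQ_inverse_real_of_nat by (simp add: divide_inverse add.commute)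
    then have "(\<lambda>k. a k + 1/(real k+1)) \<longlonglongrightarrow> 0 + 0" by (intro tendsto_add al)
    moreover have "(\<lambda>k. norm (P k - Pi)) \<longlonglongrightarrow> 0" using Pl by (simp add: tendsto_norm_zero_iff LIM_zero_iff)
    moreover have "(\<lambda>k. norm (Q k - Qi)) \<longlonglongrightarrow> 0" using Ql by (simp add: tendsto_norm_zero_iff LIM_zero_iff)
    moreover have "(\<lambda>k. norm (P k)) \<longlonglongrightarrow> norm Pi" using Pl by (rule tendsto_norm)
    ultimately have "e \<longlonglongrightarrow> 0 * LW + norm Pi * C * (0 + 0) + 0"
      unfolding e_def[abs_def] by (intro tendsto_add tendsto_mult tendsto_const al o1) auto
    then show ?thesis by simp
  qed
  have ev1: "eventually (\<lambda>k. e k < c) sequentially" using el c by (auto dest: order_tendstoD)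
  have ev2: "eventually (\<lambda>k. model_psi G S gy gu (uk k) (\<Delta>k k) < c) sequentially"
    using psi_lim c by (auto dest: order_tendstoD)
  have "eventually (\<lambda>k. False) sequentially"
    using ev1 ev2
  proof eventually_elim
    case (elim k)
    then show ?case using stepC[of k] by linarith
  qed
  then show False by simp
qed

end
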